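(* Assume (H1)–(H3), $\kappa>\tilde\kappa$, and fix $\tilde\xi$ as below. There is a constant $C>0$ (depending only on $f,h,\kappa,r_0,\tilde\xi$) such that for every $u\in\mathcal X(\mathbb R)$ with $|u|^2\le r_0^2+\tilde\xi$ on $\mathbb R$: $$|u'|^2+F(|u|^2)+\tfrac\kappa2\big((h(|u|^2))'\big)^2\ge C^{-1}\big(|u'|^2+(|u|^2-r_0^2)^2\big)\quad\text{a.e. on }\mathbb R;$$ moreover $\||u|^2-r_0^2\|_{H^1(\mathbb R)}^2\le CE_\kappa(u)$, and if $\mu=\inf_{\mathbb R}|u|>0$ then $|P(u)|\le C\mu^{-1}E_\kappa(u)$.
   Context: $r_0>0$, $f,h\in C^\infty([0,\infty);\mathbb R)$ (H1), $f(r_0^2)=0$, $F(\sigma)=\int_\sigma^{r_0^2}f(w)dw$. (H2): $1+2\kappa\sigma h'(\sigma)^2>0$ for $\sigma\in[0,r_0^2]$; (H3): $F>0$ on $[0,r_0^2)$, $F''(r_0^2)>0$. $\tilde\kappa=\sup_{\sigma\in(0,r_0^2]}(-1/(2\sigma h'(\sigma)^2))$. $\tilde\xi>0$ is fixed such that $F(\sigma)>0$ and $1+2\kappa\sigma h'(\sigma)^2>0$ for all $\sigma\in(r_0^2,r_0^2+\tilde\xi]$. $\mathcal X(\mathbb R)=\{v\in H^1_{loc}(\mathbb R;\mathbb C):v'\in L^2,|v|^2-r_0^2\in L^2\}$. $E_\kappa(v)=\int(|v'|^2+F(|v|^2)+\frac\kappa2|(h(|v|^2))'|^2)dx$. $P(v)=\int\mathrm{Re}(iv'\bar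 v)(1-r_0^2/|v|^2)dx$ for $\inf|v|>0$. *)

theory Defs
  imports "HOL-Analysis.Analysis"
begin

definition smooth_on_nonneg :: "(real \<Rightarrow> real) \<Rightarrow> bool" where
  "smooth_on_nonneg g \<longleftrightarrow> (\<exists>D :: nat \<Rightarrow> real \<Rightarrow> real. D 0 = g \<and>
      (\<forall>n. \<forall>x\<ge>0. (D n has_real_derivative D (Suc n) x) (at x within {0..})))"

definition Fpot :: "(real \<Rightarrow> real) \<Rightarrow> real \<Rightarrow> real \<Rightarrow> real" where
  "Fpot f r0 \<sigma> = (LBINT w=ereal \<sigma>..ereal (r0\<^sup>2). f w)"

definition kappa_tilde :: "(real \<Rightarrow> real) \<Rightarrow> real \<Rightarrow> ereal" where
  "kappa_tilde h r0 = (SUP \<sigma>\<in>{0<..r0\<^sup>2}.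
      (if deriv h \<sigma> = 0 then - \<infinity> else ereal (- 1 / (2 * \<sigma> * (deriv h \<sigma>)\<^sup>2))))"

text \<open>Weak derivative on the real line, for the continuous (locally absolutely continuous)
  representative: g' locally integrable and g(x) = g(0) + int_0^x g'.\<close>
definition has_weak_deriv :: "(real \<Rightarrow> 'a::{banach,second_countable_topology}) \<Rightarrow> (real \<Rightarrow> 'a) \<Rightarrow> bool" where
  "has_weak_deriv g g' \<longleftrightarrow>
     (\<forall>a b. set_integrable lborel {a..b} g') \<and>
     (\<forall>x. g x = g 0 + (LBINT t=ereal 0..ereal x. g' t))"

definition wderiv :: "(real \<Rightarrow> 'a::{banach,second_countable_topology}) \<Rightarrow> real \<Rightarrow> 'a" where
  "wderiv g = (SOME g'. has_weak_deriv g g')"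

definition X_space :: "real \<Rightarrow> (real \<Rightarrow> complex) set" where
  "X_space r0 = {v. (\<exists>v'. has_weak_deriv v v') \<and>
      integrable lborel (\<lambda>x. (cmod (wderiv v x))\<^sup>2) \<and>
      integrable lborel (\<lambda>x. ((cmod (v x))\<^sup>2 - r0\<^sup>2)\<^sup>2)}"

definition energy_density ::
  "(real \<Rightarrow> real) \<Rightarrow> (real \<Rightarrow> real) \<Rightarrow> real \<Rightarrow> real \<Rightarrow> (real \<Rightarrow> complex) \<Rightarrow> real \<Rightarrow> real" where
  "energy_density f h \<kappa> r0 v x =
     (cmod (wderiv v x))\<^sup>2 + Fpot f r0 ((cmod (v x))\<^sup>2)
     + \<kappa> / 2 * (wderiv (\<lambda>y. h ((cmod (v y))\<^sup>2)) x)\<^sup>2"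

definition E_kappa ::
  "(real \<Rightarrow> real) \<Rightarrow> (real \<Rightarrow> real) \<Rightarrow> real \<Rightarrow> real \<Rightarrow> (real \<Rightarrow> complex) \<Rightarrow> real" where
  "E_kappa f h \<kappa> r0 v = (\<integral>x. energy_density f h \<kappa> r0 v x \<partial>lborel)"

definition H1_norm_sq :: "(real \<Rightarrow> real) \<Rightarrow> real" where
  "H1_norm_sq q = (\<integral>x. (q x)\<^sup>2 \<partial>lborel) + (\<integral>x. (wderiv q x)\<^sup>2 \<partial>lborel)"

definition momentum :: "real \<Rightarrow> (real \<Rightarrow> complex) \<Rightarrow> real" where
  "momentum r0 v = (\<integral>x. Re (\<i> * wderiv v x * cnj (v x)) * (1 - r0\<^sup>2 / (cmod (v x))\<^sup>2) \<partial>lborel)"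

end

theory Submission
  imports Defs
begin


lemma ii_from_set:
  fixes g :: "real \<Rightarrow> 'a::{banach,second_countable_topology}"
  assumes "\<forall>a b. set_integrable lborel {a..b} g"
  shows "interval_lebesgue_integrable lborel (ereal x) (ereal y) g"
proof (cases "x \<le> y")
  case True
  have "set_integrable lborel {x<..<y} g"
    by (rule set_integrable_subset[of lborel "{x..y}"]) (use assms in auto)
  then show ?thesis using True by (simp add: interval_lebesgue_integrable_def)
next
  case False
  have "set_integrable lborel {y<..<x} g"
    by (rule set_integrable_subset[of lborel "{y..x}"]) (use assms in auto)
  then show ?thesis using False by (simp add: interval_lebesgue_integrable_def)
qed

lemma wd_int:
  fixes g g' :: "real \<Rightarrow> 'a::{banach,second_countable_topology}"
  shows "has_weak_deriv g g' \<Longrightarrow> \<forall>a b. set_integrable lborel {a..b} g'"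
  unfolding has_weak_deriv_def by (rule conjunct1)

lemma wd_eq:
  fixes g g' :: "real \<Rightarrow> 'a::{banach,second_countable_topology}"
  shows "has_weak_deriv g g' \<Longrightarrow> \<forall>x. g x = g 0 + (LBINT t=ereal 0..ereal x. g' t)"
  unfolding has_weak_deriv_def by (rule conjunct2)

lemma wd_diff:
  fixes g g' :: "real \<Rightarrow> 'a::{banach,second_countable_topology}"
  assumes "has_weak_deriv g g'"
  shows "g b - g a = (LBINT t=ereal a..ereal b. g' t)"
proof -
  have I: "\<forall>a b. set_integrable lborel {a..b} g'" by (rule wd_int[OF assms])
  have E: "\<forall>x. g x = g 0 + (LBINT t=ereal 0..ereal x. g' t)" by (rule wd_eq[OF assms])
  have s: "(LBINT t=ereal 0..ereal a. g' t) + (LBINT t=ereal a..ereal b. g' t) = (LBINT t=ereal 0..ereal b. g' t)"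
  proof (rule interval_integral_sum)
    have "interval_lebesgue_integrable lborel (ereal (min 0 (min a b))) (ereal (max 0 (max a b))) g'"
      by (rule ii_from_set[OF I])
    then show "interval_lebesgue_integrable lborel (min (ereal 0) (min (ereal a) (ereal b))) (max (ereal 0) (max (ereal a) (ereal b))) g'"
      by (simp only: ereal_min ereal_max)
  qed
  have ga: "g a = g 0 + (LBINT t=ereal 0..ereal a. g' t)" by (rule E[rule_format])
  have gb: "g b = g 0 + (LBINT t=ereal 0..ereal b. g' t)" by (rule E[rule_format])
  have "g b - g a = (LBINT t=ereal 0..ereal b. g' t) - (LBINT t=ereal 0..ereal a. g' t)"
    by (simp only: ga gb add_diff_cancel_left)
  also have "\<dots> = ((LBINT t=ereal 0..ereal a. g' t) + (LBINT t=ereal a..ereal b. g' t)) - (LBINT t=ereal 0..ereal a. g' t)"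
    by (simp only: s)
  also have "\<dots> = (LBINT t=ereal a..ereal b. g' t)" by (rule add_diff_cancel_left')
  finally show ?thesis .
qed

lemma wd_intro:
  fixes g g' :: "real \<Rightarrow> 'a::{banach,second_countable_topology}"
  assumes "\<forall>a b. set_integrable lborel {a..b} g'"
    and "\<And>a b. a \<le> b \<Longrightarrow> g b - g a = (LBINT t=ereal a..ereal b. g' t)"
  shows "has_weak_deriv g g'"
  unfolding has_weak_deriv_def
proof (intro conjI allI)
  fix a b show "set_integrable lborel {a..b} g'" using assms by auto
next
  fix x
  show "g x = g 0 + (LBINT t=ereal 0..ereal x. g' t)"
  proof (cases "0 \<le> x")
    case True then show ?thesis using assms(2)[of 0 x] by (simp add: algebra_simps)
  next
    case False
    then have "g 0 - g x = (LBINT t=ereal x..ereal 0. g' t)" using assms(2)[of x 0] by simp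
    then show ?thesis by (simp add: interval_integral_endpoints_reverse[of "ereal 0"] algebra_simps)
  qed
qed

lemma wd_measurable:
  fixes g :: "real \<Rightarrow> 'a::{banach,second_countable_topology}"
  assumes "\<forall>a b. set_integrable lborel {a..b} g"
  shows "g \<in> borel_measurable lborel"
proof (rule borel_measurable_LIMSEQ_metric)
  fix n :: nat
  show "(\<lambda>x. indicator {- real n..real n} x *\<^sub>R g x) \<in> borel_measurable lborel"
    using assms unfolding set_integrable_def by (metis borel_measurable_integrable)
next
  fix x :: real
  obtain N :: nat where N: "\<bar>x\<bar> \<le> N" using real_arch_simple by blast
  have "eventually (\<lambda>n. indicator {- real n..real n} x *\<^sub>R g x = g x) sequentially"
    unfolding eventually_sequentially
    by (rule exI[of _ N]) (use N in \<open>auto simp: indicator_def\<close>)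
  then show "(\<lambda>n. indicator {- real n..real n} x *\<^sub>R g x) \<longlonglongrightarrow> g x"
    by (rule tendsto_eventually)
qed

lemma wd_continuous:
  fixes g g' :: "real \<Rightarrow> 'a::euclidean_space"
  assumes "has_weak_deriv g g'"
  shows "continuous_on UNIV g"
proof -
  have I: "\<forall>a b. set_integrable lborel {a..b} g'" by (rule wd_int[OF assms])
  have "isCont g x" for x
  proof -
    let ?a = "x - 1" and ?b = "x + 1"
    have gi: "g' integrable_on {?a..?b}" using I set_borel_integral_eq_integral(1) by blast
    have eq: "g y = g ?a + integral {?a..y} g'" if "y \<in> {?a..?b}" for y
    proof -
      have "g y - g ?a = (LBINT t=ereal ?a..ereal y. g' t)" by (rule wd_diff[OF assms])
      also have "\<dots> = integral {?a..y} g'"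
        using that I by (intro interval_integral_eq_integral) auto
      finally show ?thesis by (metis add.commute diff_add_cancel)
    qed
    have "continuous_on {?a..?b} (\<lambda>y. g ?a + integral {?a..y} g')"
      by (intro continuous_intros indefinite_integral_continuous_1 gi)
    then have "continuous_on {?a..?b} g"
    proof (rule continuous_on_eq)
      fix y assume "y \<in> {?a..?b}"
      then show "g ?a + integral {?a..y} g' = g y" by (rule sym[OF eq])
    qed
    then show "isCont g x"
      by (rule continuous_on_interior) (auto simp: interior_atLeastAtMost_real)
  qed
  then show ?thesis by (simp add: continuous_on_eq_continuous_at)
qed



lemma ennreal_max_eq_imp: "ennreal (max 0 (a::real)) = ennreal (max 0 (-a)) \<Longrightarrow> a = 0"
  by (cases "a > 0"; cases "a < 0") (auto simp: max_def split: if_splits)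

lemma wd_unique_zero:
  fixes g :: "real \<Rightarrow> real"
  assumes I: "\<forall>a b. set_integrable lborel {a..b} g"
    and Z: "\<And>a b. a \<le> b \<Longrightarrow> (LBINT t=ereal a..ereal b. g t) = 0"
  shows "AE x in lborel. g x = 0"
proof -
  have gm[measurable]: "g \<in> borel_measurable borel" using wd_measurable[OF I] by simp
  have n: "AE x in lborel. x \<in> {-real n..real n} \<longrightarrow> g x = 0" for n :: nat
  proof -
    define f where "f x = indicator {-real n..real n} x * g x" for x
    have fi: "integrable lborel f" using I unfolding f_def set_integrable_def by simp
    have fm[measurable]: "f \<in> borel_measurable borel" unfolding f_def by measurable
    have Zs: "integral\<^sup>L lborel (\<lambda>y. f y * indicator {x<..} y) = 0" for x
    proof -
      have "integral\<^sup>L lborel (\<lambda>y. f y * indicator {x<..} y)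
          = (LINT y:({x<..} \<inter> {-real n..real n})|lborel. g y)"
        unfolding f_def set_lebesgue_integral_def
        by (intro Bochner_Integration.integral_cong) (auto simp: indicator_def)
      also have "\<dots> = 0"
      proof (cases "x < - real n")
        case True
        then have "{x<..} \<inter> {-real n..real n} = {-real n..real n}" by auto
        then show ?thesis using Z[of "-real n" "real n"] interval_integral_Icc[of "-real n" "real n" g] by simp
      next
        case False
        show ?thesis
        proof (cases "x \<le> real n")
          case True
          then have "{x<..} \<inter> {-real n..real n} = {x<..real n}" using False by auto
          then show ?thesis using Z[of x "real n"] interval_integral_Ioc[of x "real n" g] True by simp
        next
          case False
          then have "{x<..} \<inter> {-real n..real n} = {}" by auto
          then show ?thesis by (simp add: set_lebesgue_integral_def)
        qed
      qed
      finally show ?thesis .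
    qed
    let ?p = "\<lambda>x. ennreal (max 0 (f x))" and ?q = "\<lambda>x. ennreal (max 0 (- f x))"
    have pint: "integrable lborel (\<lambda>y. max 0 (f y) * indicator A y)" if [measurable]: "A \<in> sets borel" for A
      by (rule Bochner_Integration.integrable_bound[OF integrable_abs[OF fi]]) (auto simp: indicator_def)
    have qint: "integrable lborel (\<lambda>y. max 0 (- f y) * indicator A y)" if [measurable]: "A \<in> sets borel" for A
      by (rule Bochner_Integration.integrable_bound[OF integrable_abs[OF fi]]) (auto simp: indicator_def)
    have em: "emeasure (density lborel ?p) {x<..} = ennreal (integral\<^sup>L lborel (\<lambda>y. max 0 (f y) * indicator {x<..} y))"
      for x
      by (subst emeasure_density) (auto simp: ennreal_mult'[symmetric] ennreal_indicator[symmetric] intro!: nn_integral_eq_integral pint)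
    have em2: "emeasure (density lborel ?q) {x<..} = ennreal (integral\<^sup>L lborel (\<lambda>y. max 0 (- f y) * indicator {x<..} y))"
      for x
      by (subst emeasure_density) (auto simp: ennreal_mult'[symmetric] ennreal_indicator[symmetric] intro!: nn_integral_eq_integral qint)
    have "density lborel ?p = density lborel ?q"
    proof (rule measure_eqI_lessThan)
      fix x
      show "emeasure (density lborel ?p) {x<..} < \<infinity>" using em by simp
      have p1: "integrable lborel (\<lambda>y. max 0 (f y) * indicator {x<..} y)" by (rule pint) simp
      have q1: "integrable lborel (\<lambda>y. max 0 (- f y) * indicator {x<..} y)" by (rule qint) simp
      have "integral\<^sup>L lborel (\<lambda>y. max 0 (f y) * indicator {x<..} y) - integral\<^sup>L lborel (\<lambda>y. max 0 (- f y) * indicator {x<..} y)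
          = integral\<^sup>L lborel (\<lambda>y. max 0 (f y) * indicator {x<..} y - max 0 (- f y) * indicator {x<..} y)"
        by (rule Bochner_Integration.integral_diff[symmetric, OF p1 q1])
      also have "\<dots> = integral\<^sup>L lborel (\<lambda>y. f y * indicator {x<..} y)"
        by (rule Bochner_Integration.integral_cong) (auto simp: max_def)
      finally have "integral\<^sup>L lborel (\<lambda>y. max 0 (f y) * indicator {x<..} y) - integral\<^sup>L lborel (\<lambda>y. max 0 (- f y) * indicator {x<..} y)
          = integral\<^sup>L lborel (\<lambda>y. f y * indicator {x<..} y)" .
      then show "emeasure (density lborel ?p) {x<..} = emeasure (density lborel ?q) {x<..}"
        using em em2 Zs[of x] by simp
    qed auto
    then have "AE x in lborel. ?p x = ?q x" by (intro sigma_finite_measure.density_unique[OF sigma_finite_lborel]) auto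
    then show ?thesis
      by eventually_elim (auto simp: f_def dest!: ennreal_max_eq_imp)
  qed
  then have "AE x in lborel. \<forall>n::nat. x \<in> {-real n..real n} \<longrightarrow> g x = 0"
    unfolding AE_all_countable using n by blast
  then show ?thesis
  proof eventually_elim
    case (elim x)
    obtain N :: nat where "\<bar>x\<bar> \<le> N" using real_arch_simple by blast
    then have "- real N \<le> x \<and> x \<le> real N" by linarith
    then show ?case using elim[rule_format, of N] by simp
  qed
qed

lemma wd_unique:
  fixes g g1 g2 :: "real \<Rightarrow> real"
  assumes "has_weak_deriv g g1" "has_weak_deriv g g2"
  shows "AE x in lborel. g1 x = g2 x"
proof -
  have I1: "\<forall>a b. set_integrable lborel {a..b} g1" and I2: "\<forall>a b. set_integrable lborel {a..b} g2"
    using wd_int[OF assms(1)] wd_int[OF assms(2)] by blast+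
  have "AE x in lborel. g1 x - g2 x = 0"
  proof (rule wd_unique_zero)
    show "\<forall>a b. set_integrable lborel {a..b} (\<lambda>x. g1 x - g2 x)" using I1 I2 by (blast intro: set_integral_diff(1))
    fix a b :: real assume "a \<le> b"
    have "(LBINT t=ereal a..ereal b. g1 t - g2 t) = (LBINT t=ereal a..ereal b. g1 t) - (LBINT t=ereal a..ereal b. g2 t)"
      by (rule interval_lebesgue_integral_diff) (rule ii_from_set, rule I1, rule ii_from_set, rule I2)
    also have "\<dots> = 0" using wd_diff[OF assms(1), of b a] wd_diff[OF assms(2), of b a] by simp
    finally show "(LBINT t=ereal a..ereal b. g1 t - g2 t) = 0" .
  qed
  then show ?thesis by auto
qed

lemma wderiv_AE:
  fixes g g' :: "real \<Rightarrow> real"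
  assumes "has_weak_deriv g g'"
  shows "AE x in lborel. wderiv g x = g' x"
proof -
  have "has_weak_deriv g (wderiv g)" unfolding wderiv_def by (rule someI[of _ g']) (rule assms)
  then show ?thesis using wd_unique assms by blast
qed



lemma partition_bound:
  fixes G I :: "real \<Rightarrow> real"
  assumes d: "\<delta> > 0" and AB: "A \<le> B"
    and loc: "\<And>a b. A \<le> a \<Longrightarrow> a \<le> b \<Longrightarrow> b \<le> B \<Longrightarrow> b - a < \<delta> \<Longrightarrow> \<bar>G b - G a\<bar> \<le> I b - I a"
  shows "\<bar>G B - G A\<bar> \<le> I B - I A"
proof -
  have "\<forall>b. A \<le> b \<and> b \<le> B \<and> b - A \<le> real n * (\<delta>/2) \<longrightarrow> \<bar>G b - G A\<bar> \<le> I b - I A" for n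
  proof (induction n)
    case 0
    then show ?case by auto
  next
    case (Suc n)
    show ?case
    proof (intro allI impI)
      fix b assume b: "A \<le> b \<and> b \<le> B \<and> b - A \<le> real (Suc n) * (\<delta>/2)"
      show "\<bar>G b - G A\<bar> \<le> I b - I A"
      proof (cases "b - A \<le> real n * (\<delta>/2)")
        case True then show ?thesis using Suc b by auto
      next
        case False
        define c where "c = A + real n * (\<delta>/2)"
        have c: "A \<le> c" "c \<le> b" "b - c < \<delta>" using False b d by (auto simp: c_def algebra_simps)
        have 1: "\<bar>G b - G c\<bar> \<le> I b - I c" using loc[of c b] c b by auto
        have 2: "\<bar>G c - G A\<bar> \<le> I c - I A" using Suc[rule_format, of c] c b by (auto simp: c_def)
        show ?thesis using 1 2 by linarith
      qed
    qed
  qed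
  moreover obtain n :: nat where "(B - A) / (\<delta>/2) \<le> n" using real_arch_simple by blast
  then have "B - A \<le> real n * (\<delta>/2)" using d by (simp add: field_simps)
  ultimately show ?thesis using AB by auto
qed

lemma eps_zero:
  fixes d K :: real
  assumes "\<And>\<epsilon>. \<epsilon> > 0 \<Longrightarrow> \<bar>d\<bar> \<le> \<epsilon> * K"
  shows "d = 0"
proof (rule ccontr)
  assume "d \<noteq> 0"
  show False
  proof (cases "K > 0")
    case True
    have "\<bar>d\<bar> \<le> (\<bar>d\<bar> / (2*K)) * K" using assms[of "\<bar>d\<bar> / (2*K)"] True \<open>d \<noteq> 0\<close> by simp
    also have "\<dots> = \<bar>d\<bar> / 2" using True by simp
    finally show False using \<open>d \<noteq> 0\<close> by simp
  next
    case False
    then have "\<bar>d\<bar> \<le> 1 * K" using assms[of 1] by simp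
    then show False using False \<open>d \<noteq> 0\<close> by simp
  qed
qed

lemma mvt_between:
  fixes \<Phi> \<Phi>' :: "real \<Rightarrow> real"
  assumes S: "is_interval S" and p: "p \<in> S" and q: "q \<in> S"
    and d\<Phi>: "\<And>s. s \<in> S \<Longrightarrow> (\<Phi> has_real_derivative \<Phi>' s) (at s within S)"
  shows "\<exists>\<xi>. min p q \<le> \<xi> \<and> \<xi> \<le> max p q \<and> \<Phi> q - \<Phi> p = \<Phi>' \<xi> * (q - p)"
proof -
  have gen: "\<exists>\<xi>\<in>{x..y}. \<Phi> y - \<Phi> x = \<Phi>' \<xi> * (y - x)" if xy: "x \<in> S" "y \<in> S" "x \<le> y" for x y
  proof -
    have sub: "{x..y} \<subseteq> S"
    proof
      fix z assume "z \<in> {x..y}"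
      then have "x \<le> z" "z \<le> y" by auto
      then show "z \<in> S" using S xy unfolding is_interval_1 by blast
    qed
    have "\<exists>\<xi>\<in>{x..y}. \<Phi> y - \<Phi> x = (\<lambda>h. \<Phi>' \<xi> * h) (y - x)"
    proof (rule mvt_very_simple[OF \<open>x \<le> y\<close>])
      fix z assume "x \<le> z" "z \<le> y"
      then have "z \<in> S" using sub by auto
      have "(\<Phi> has_real_derivative \<Phi>' z) (at z within {x..y})"
        by (rule DERIV_subset[OF d\<Phi>[OF \<open>z \<in> S\<close>] sub])
      then show "(\<Phi> has_derivative (\<lambda>h. \<Phi>' z * h)) (at z within {x..y})"
        unfolding has_field_derivative_def by simp
    qed
    then show ?thesis by simp
  qed
  show ?thesis
  proof (cases "p \<le> q")
    case True
    then obtain \<xi> where x1: "\<xi> \<in> {p..q}" and x2: "\<Phi> q - \<Phi> p = \<Phi>' \<xi> * (q - p)" using gen[OF p q] by blast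
    have "min p q \<le> \<xi> \<and> \<xi> \<le> max p q" using x1 True by simp
    then show ?thesis using x2 by blast
  next
    case False
    then obtain \<xi> where x1: "\<xi> \<in> {q..p}" and x2: "\<Phi> p - \<Phi> q = \<Phi>' \<xi> * (p - q)" using gen[OF q p] by auto
    have "min p q \<le> \<xi> \<and> \<xi> \<le> max p q" using x1 False by simp
    moreover have "\<Phi> q - \<Phi> p = \<Phi>' \<xi> * (q - p)" using x2 by (simp add: algebra_simps)
    ultimately show ?thesis by blast
  qed
qed

lemma wd_chain:
  fixes \<rho> \<rho>' \<Phi> \<Phi>' :: "real \<Rightarrow> real" and S :: "real set"
  assumes wd: "has_weak_deriv \<rho> \<rho>'"
    and S: "is_interval S" "closed S" and \<rho>S: "\<And>x. \<rho> x \<in> S"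
    and d\<Phi>: "\<And>s. s \<in> S \<Longrightarrow> (\<Phi> has_real_derivative \<Phi>' s) (at s within S)"
    and c\<Phi>': "continuous_on S \<Phi>'"
  shows "has_weak_deriv (\<lambda>x. \<Phi> (\<rho> x)) (\<lambda>x. \<Phi>' (\<rho> x) * \<rho>' x)"
proof -
  have I: "\<forall>a b. set_integrable lborel {a..b} \<rho>'" by (rule wd_int[OF wd])
  have c\<rho>: "continuous_on UNIV \<rho>" by (rule wd_continuous[OF wd])
  have \<rho>'m[measurable]: "\<rho>' \<in> borel_measurable borel" using wd_measurable[OF I] by simp
  have c\<Phi>'\<rho>: "continuous_on UNIV (\<lambda>x. \<Phi>' (\<rho> x))"
    by (rule continuous_on_compose2[OF c\<Phi>' c\<rho>]) (use \<rho>S in auto)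
  have \<Phi>'\<rho>m[measurable]: "(\<lambda>x. \<Phi>' (\<rho> x)) \<in> borel_measurable borel"
    using c\<Phi>'\<rho> by (rule borel_measurable_continuous_onI)
  have I2: "\<forall>a b. set_integrable lborel {a..b} (\<lambda>x. \<Phi>' (\<rho> x) * \<rho>' x)"
  proof (intro allI)
    fix a b :: real
    have "compact ((\<lambda>x. \<Phi>' (\<rho> x)) ` {a..b})"
      by (rule compact_continuous_image) (auto intro: continuous_on_subset[OF c\<Phi>'\<rho>])
    then obtain K where K: "\<forall>x\<in>{a..b}. \<bar>\<Phi>' (\<rho> x)\<bar> \<le> K"
      by (auto dest!: compact_imp_bounded simp: bounded_iff)
    have "integrable lborel (\<lambda>x. K * (indicator {a..b} x *\<^sub>R \<rho>' x))"
      using I unfolding set_integrable_def by auto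
    then show "set_integrable lborel {a..b} (\<lambda>x. \<Phi>' (\<rho> x) * \<rho>' x)"
      unfolding set_integrable_def
    proof (rule Bochner_Integration.integrable_bound)
      show "AE x in lborel. norm (indicator {a..b} x *\<^sub>R (\<Phi>' (\<rho> x) * \<rho>' x)) \<le> norm (K * (indicator {a..b} x *\<^sub>R \<rho>' x))"
      proof (intro AE_I2)
        fix x show "norm (indicator {a..b} x *\<^sub>R (\<Phi>' (\<rho> x) * \<rho>' x)) \<le> norm (K * (indicator {a..b} x *\<^sub>R \<rho>' x))"
        proof (cases "x \<in> {a..b}")
          case True
          then have "\<bar>\<Phi>' (\<rho> x)\<bar> \<le> \<bar>K\<bar>" using K by fastforce
          then show ?thesis using True by (auto simp: abs_mult intro!: mult_right_mono)
        qed auto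
      qed
    qed auto
  qed
  have main: "\<Phi> (\<rho> B) - \<Phi> (\<rho> A) = (LBINT t=ereal A..ereal B. \<Phi>' (\<rho> t) * \<rho>' t)" if AB: "A \<le> B" for A B
  proof -
    define J where "J a b = (LBINT t=ereal a..ereal b. \<Phi>' (\<rho> t) * \<rho>' t)" for a b
    define L where "L a b = (LBINT t=ereal a..ereal b. \<bar>\<rho>' t\<bar>)" for a b
    have Ia: "\<forall>a b. set_integrable lborel {a..b} (\<lambda>t. \<bar>\<rho>' t\<bar>)"
      using I by (auto intro: set_integrable_abs)
    have Jadd0: "J A a + J a b = J A b" for a b
      unfolding J_def
      apply (rule interval_integral_sum)
      using ii_from_set[OF I2, of "min A (min a b)" "max A (max a b)"] apply (simp only: ereal_min ereal_max)
      done
    have Jadd: "J A b - J A a = J a b" for a b using Jadd0[of a b] by simp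
    have Ladd0: "L A a + L a b = L A b" for a b
      unfolding L_def
      apply (rule interval_integral_sum)
      using ii_from_set[OF Ia, of "min A (min a b)" "max A (max a b)"] apply (simp only: ereal_min ereal_max)
      done
    have Ladd: "L A b - L A a = L a b" for a b using Ladd0[of a b] by simp
    have loc: "\<exists>\<delta>>0. \<forall>a b. A \<le> a \<longrightarrow> a \<le> b \<longrightarrow> b \<le> B \<longrightarrow> b - a < \<delta> \<longrightarrow>
                 \<bar>\<Phi> (\<rho> b) - \<Phi> (\<rho> a) - J a b\<bar> \<le> \<epsilon> * L a b" if \<epsilon>: "\<epsilon> > 0" for \<epsilon>
    proof -
      have "compact (\<rho> ` {A..B})"
        by (rule compact_continuous_image) (auto intro: continuous_on_subset[OF c\<rho>])
      then obtain R where R0: "\<forall>t\<in>{A..B}. \<bar>\<rho> t\<bar> \<le> R"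
        by (auto dest!: compact_imp_bounded simp: bounded_iff)
      have R: "\<bar>\<rho> t\<bar> \<le> R" if "t \<in> {A..B}" for t using R0 that by blast
      define K where "K = S \<inter> {-R-1..R+1}"
      have "compact K" unfolding K_def using S(2) by (intro closed_Int_compact) auto
      then have "uniformly_continuous_on K \<Phi>'"
        by (intro compact_uniformly_continuous continuous_on_subset[OF c\<Phi>']) (auto simp: K_def)
      then obtain \<eta> where \<eta>: "\<eta> > 0" "\<And>x x'. x \<in> K \<Longrightarrow> x' \<in> K \<Longrightarrow> dist x' x < \<eta> \<Longrightarrow> dist (\<Phi>' x') (\<Phi>' x) < \<epsilon>"
        unfolding uniformly_continuous_on_def using \<epsilon> by metis
      have "uniformly_continuous_on {A..B} \<rho>"
        by (intro compact_uniformly_continuous continuous_on_subset[OF c\<rho>]) auto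
      then obtain \<delta> where \<delta>: "\<delta> > 0" "\<And>x x'. x \<in> {A..B} \<Longrightarrow> x' \<in> {A..B} \<Longrightarrow> dist x' x < \<delta> \<Longrightarrow> dist (\<rho> x') (\<rho> x) < min \<eta> 1"
        unfolding uniformly_continuous_on_def using \<eta>(1) by (metis min_less_iff_conj zero_less_one)
      show ?thesis
      proof (intro exI[of _ \<delta>] conjI allI impI \<delta>(1))
        fix a b assume ab: "A \<le> a" "a \<le> b" "b \<le> B" "b - a < \<delta>"
        obtain \<xi> where \<xi>: "min (\<rho> a) (\<rho> b) \<le> \<xi>" "\<xi> \<le> max (\<rho> a) (\<rho> b)" "\<Phi> (\<rho> b) - \<Phi> (\<rho> a) = \<Phi>' \<xi> * (\<rho> b - \<rho> a)"
          using mvt_between[OF S(1) \<rho>S \<rho>S d\<Phi>] by blast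
        have mn: "min (\<rho> a) (\<rho> b) \<in> S" "max (\<rho> a) (\<rho> b) \<in> S"
          using \<rho>S[of a] \<rho>S[of b] by (auto simp: min_def max_def)
        have \<xi>S: "\<xi> \<in> S" using S(1) mn \<xi>(1,2) unfolding is_interval_1 by blast
        have pt: "\<bar>\<Phi>' \<xi> - \<Phi>' (\<rho> t)\<bar> \<le> \<epsilon>" if t: "t \<in> {a..b}" for t
        proof -
          have "dist (\<rho> a) (\<rho> t) < min \<eta> 1" "dist (\<rho> b) (\<rho> t) < min \<eta> 1"
            using \<delta>(2)[of t a] \<delta>(2)[of t b] t ab by (auto simp: dist_real_def)
          then have d: "\<bar>\<xi> - \<rho> t\<bar> < min \<eta> 1" using \<xi>(1,2) by (auto simp: dist_real_def min_def max_def split: if_splits)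
          have tK: "\<rho> t \<in> K" using R[of t] t ab \<rho>S[of t] by (auto simp: K_def)
          have "\<xi> \<in> K" using R[of t] t ab d \<xi>S by (auto simp: K_def)
          then show ?thesis using \<eta>(2)[OF tK \<open>\<xi> \<in> K\<close>] d by (auto simp: dist_real_def)
        qed
        have ii1: "interval_lebesgue_integrable lborel (ereal a) (ereal b) (\<lambda>t. \<Phi>' \<xi> * \<rho>' t)"
          using ii_from_set[OF I] by auto
        have ii2: "interval_lebesgue_integrable lborel (ereal a) (ereal b) (\<lambda>t. \<Phi>' (\<rho> t) * \<rho>' t)"
          using ii_from_set[OF I2] by auto
        have "\<Phi> (\<rho> b) - \<Phi> (\<rho> a) - J a b = \<Phi>' \<xi> * (LBINT t=ereal a..ereal b. \<rho>' t) - J a b"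
          using \<xi>(3) wd_diff[OF wd, of b a] by simp
        also have "\<dots> = (LBINT t=ereal a..ereal b. \<Phi>' \<xi> * \<rho>' t - \<Phi>' (\<rho> t) * \<rho>' t)"
          unfolding J_def using interval_lebesgue_integral_diff[OF ii1 ii2] by simp
        finally have eq: "\<Phi> (\<rho> b) - \<Phi> (\<rho> a) - J a b = (LBINT t=ereal a..ereal b. (\<Phi>' \<xi> - \<Phi>' (\<rho> t)) * \<rho>' t)"
          by (simp add: algebra_simps)
        have ii3: "interval_lebesgue_integrable lborel (ereal a) (ereal b) (\<lambda>t. (\<Phi>' \<xi> - \<Phi>' (\<rho> t)) * \<rho>' t)"
          using interval_lebesgue_integral_diff(1)[OF ii1 ii2] by (simp add: algebra_simps)
        have "\<bar>\<Phi> (\<rho> b) - \<Phi> (\<rho> a) - J a b\<bar> \<le> (LBINT t=ereal a..ereal b. norm ((\<Phi>' \<xi> - \<Phi>' (\<rho> t)) * \<rho>' t))"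
          unfolding eq using interval_integral_norm[OF ii3] ab by simp
        also have "\<dots> = (LBINT t:{a..b}. norm ((\<Phi>' \<xi> - \<Phi>' (\<rho> t)) * \<rho>' t))"
          using ab by (simp add: interval_integral_Icc)
        also have "\<dots> \<le> (LBINT t:{a..b}. \<epsilon> * \<bar>\<rho>' t\<bar>)"
        proof (rule set_integral_mono)
          have s1: "set_integrable lborel {a..b} (\<lambda>t. \<Phi>' \<xi> * \<rho>' t)" using I by simp
          have s2: "set_integrable lborel {a..b} (\<lambda>t. \<Phi>' (\<rho> t) * \<rho>' t)" using I2 by simp
          have "set_integrable lborel {a..b} (\<lambda>t. \<Phi>' \<xi> * \<rho>' t - \<Phi>' (\<rho> t) * \<rho>' t)"
            by (rule set_integral_diff(1)[OF s1 s2])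
          then have "set_integrable lborel {a..b} (\<lambda>t. \<bar>\<Phi>' \<xi> * \<rho>' t - \<Phi>' (\<rho> t) * \<rho>' t\<bar>)"
            by (rule set_integrable_abs)
          then show "set_integrable lborel {a..b} (\<lambda>t. norm ((\<Phi>' \<xi> - \<Phi>' (\<rho> t)) * \<rho>' t))"
            by (simp add: left_diff_distrib)
          show "set_integrable lborel {a..b} (\<lambda>t. \<epsilon> * \<bar>\<rho>' t\<bar>)" using Ia by auto
          fix t assume "t \<in> {a..b}"
          then show "norm ((\<Phi>' \<xi> - \<Phi>' (\<rho> t)) * \<rho>' t) \<le> \<epsilon> * \<bar>\<rho>' t\<bar>"
            using pt[of t] by (auto simp: abs_mult intro!: mult_right_mono)
        qed
        also have "\<dots> = \<epsilon> * L a b"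
          unfolding L_def using ab by (simp add: interval_integral_Icc)
        finally show "\<bar>\<Phi> (\<rho> b) - \<Phi> (\<rho> a) - J a b\<bar> \<le> \<epsilon> * L a b" .
      qed
    qed
    have "\<Phi> (\<rho> B) - \<Phi> (\<rho> A) - J A B = 0"
    proof (rule eps_zero)
      fix \<epsilon> :: real assume "\<epsilon> > 0"
      then obtain \<delta> where \<delta>: "\<delta> > 0" "\<forall>a b. A \<le> a \<longrightarrow> a \<le> b \<longrightarrow> b \<le> B \<longrightarrow> b - a < \<delta> \<longrightarrow>
                 \<bar>\<Phi> (\<rho> b) - \<Phi> (\<rho> a) - J a b\<bar> \<le> \<epsilon> * L a b" using loc by blast
      have "\<bar>(\<Phi> (\<rho> B) - J A B) - (\<Phi> (\<rho> A) - J A A)\<bar> \<le> \<epsilon> * L A B - \<epsilon> * L A A"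
      proof (rule partition_bound[OF \<delta>(1) AB, of "\<lambda>y. \<Phi> (\<rho> y) - J A y" "\<lambda>y. \<epsilon> * L A y"])
        fix a b assume "A \<le> a" "a \<le> b" "b \<le> B" "b - a < \<delta>"
        then have "\<bar>\<Phi> (\<rho> b) - \<Phi> (\<rho> a) - J a b\<bar> \<le> \<epsilon> * L a b" using \<delta>(2) by blast
        moreover have "J a b = J A b - J A a" "L a b = L A b - L A a" using Jadd Ladd by auto
        ultimately show "\<bar>\<Phi> (\<rho> b) - J A b - (\<Phi> (\<rho> a) - J A a)\<bar> \<le> \<epsilon> * L A b - \<epsilon> * L A a"
          by (simp add: algebra_simps)
      qed
      moreover have "J A A = 0" "L A A = 0" unfolding J_def L_def by auto
      ultimately show "\<bar>\<Phi> (\<rho> B) - \<Phi> (\<rho> A) - J A B\<bar> \<le> \<epsilon> * L A B" by (simp add: algebra_simps)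
    qed
    then show ?thesis unfolding J_def by simp
  qed
  show ?thesis by (rule wd_intro[OF I2 main])
qed



lemma wd_linear:
  fixes u w :: "real \<Rightarrow> 'a::{banach,second_countable_topology}"
    and T :: "'a \<Rightarrow> 'b::{banach,second_countable_topology}"
  assumes T: "bounded_linear T" and wd: "has_weak_deriv u w"
  shows "has_weak_deriv (\<lambda>x. T (u x)) (\<lambda>x. T (w x))"
proof (rule wd_intro)
  have I: "\<forall>a b. set_integrable lborel {a..b} w" by (rule wd_int[OF wd])
  show "\<forall>a b. set_integrable lborel {a..b} (\<lambda>x. T (w x))"
  proof (intro allI)
    fix a b :: real
    have "integrable lborel (\<lambda>x. T (indicator {a..b} x *\<^sub>R w x))"
      by (rule integrable_bounded_linear[OF T]) (use I in \<open>auto simp: set_integrable_def\<close>)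
    then show "set_integrable lborel {a..b} (\<lambda>x. T (w x))"
      by (simp add: set_integrable_def linear_scale[OF bounded_linear.linear[OF T]])
  qed
  fix a b :: real assume ab: "a \<le> b"
  have "T (u b) - T (u a) = T (u b - u a)" by (simp add: linear_diff[OF bounded_linear.linear[OF T]])
  also have "u b - u a = (LBINT t=ereal a..ereal b. w t)" by (rule wd_diff[OF wd])
  also have "T (LBINT t=ereal a..ereal b. w t) = (LBINT t=ereal a..ereal b. T (w t))"
  proof -
    have int: "integrable lborel (\<lambda>x. indicator (einterval (ereal a) (ereal b)) x *\<^sub>R w x)"
      using ii_from_set[OF I, of a b] ab by (simp add: interval_lebesgue_integrable_def set_integrable_def)
    have "T (LINT x|lborel. indicator (einterval (ereal a) (ereal b)) x *\<^sub>R w x)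
        = (LINT x|lborel. T (indicator (einterval (ereal a) (ereal b)) x *\<^sub>R w x))"
      by (rule integral_bounded_linear[OF T int, symmetric])
    also have "\<dots> = (LINT x|lborel. indicator (einterval (ereal a) (ereal b)) x *\<^sub>R T (w x))"
      by (simp add: linear_scale[OF bounded_linear.linear[OF T]])
    finally show ?thesis using ab
      by (simp add: interval_lebesgue_integral_def set_lebesgue_integral_def)
  qed
  finally show "T (u b) - T (u a) = (LBINT t=ereal a..ereal b. T (w t))" .
qed

lemma wd_add:
  fixes f f' g g' :: "real \<Rightarrow> 'a::{banach,second_countable_topology}"
  assumes wf: "has_weak_deriv f f'" and wg: "has_weak_deriv g g'"
  shows "has_weak_deriv (\<lambda>x. f x + g x) (\<lambda>x. f' x + g' x)"
proof (rule wd_intro)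
  have I1: "\<forall>a b. set_integrable lborel {a..b} f'" by (rule wd_int[OF wf])
  have I2: "\<forall>a b. set_integrable lborel {a..b} g'" by (rule wd_int[OF wg])
  show "\<forall>a b. set_integrable lborel {a..b} (\<lambda>x. f' x + g' x)" using I1 I2 by (blast intro: set_integral_add(1))
  fix a b :: real assume "a \<le> b"
  have "(f b + g b) - (f a + g a) = (f b - f a) + (g b - g a)" by (simp add: algebra_simps)
  also have "\<dots> = (LBINT t=ereal a..ereal b. f' t) + (LBINT t=ereal a..ereal b. g' t)"
    using wd_diff[OF wf] wd_diff[OF wg] by simp
  also have "\<dots> = (LBINT t=ereal a..ereal b. f' t + g' t)"
    by (rule interval_lebesgue_integral_add(2)[symmetric]) (rule ii_from_set, rule I1, rule ii_from_set, rule I2)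
  finally show "(f b + g b) - (f a + g a) = (LBINT t=ereal a..ereal b. f' t + g' t)" .
qed

lemma wd_minus_const:
  fixes f f' :: "real \<Rightarrow> 'a::{banach,second_countable_topology}"
  assumes wf: "has_weak_deriv f f'"
  shows "has_weak_deriv (\<lambda>x. f x - c) f'"
proof (rule wd_intro)
  show "\<forall>a b. set_integrable lborel {a..b} f'" by (rule wd_int[OF wf])
  fix a b :: real
  show "(f b - c) - (f a - c) = (LBINT t=ereal a..ereal b. f' t)" using wd_diff[OF wf, of b a] by simp
qed

lemma wd_normsq:
  fixes u w :: "real \<Rightarrow> complex"
  assumes wd: "has_weak_deriv u w"
  shows "has_weak_deriv (\<lambda>x. (cmod (u x))\<^sup>2) (\<lambda>x. 2 * Re (w x * cnj (u x)))"
proof -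
  have re: "has_weak_deriv (\<lambda>x. Re (u x)) (\<lambda>x. Re (w x))" by (rule wd_linear[OF bounded_linear_Re wd])
  have im: "has_weak_deriv (\<lambda>x. Im (u x)) (\<lambda>x. Im (w x))" by (rule wd_linear[OF bounded_linear_Im wd])
  have sq: "has_weak_deriv (\<lambda>x. (g x)\<^sup>2) (\<lambda>x. 2 * g x * g' x)" if "has_weak_deriv g g'" for g g' :: "real \<Rightarrow> real"
  proof -
    have "has_weak_deriv (\<lambda>x. (\<lambda>s. s\<^sup>2) (g x)) (\<lambda>x. (\<lambda>s. 2 * s) (g x) * g' x)"
    proof (rule wd_chain[OF that, where S=UNIV])
      fix s :: real show "((\<lambda>s. s\<^sup>2) has_real_derivative 2 * s) (at s within UNIV)"
        by (auto intro!: derivative_eq_intros)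
    qed (auto intro!: continuous_intros)
    then show ?thesis by simp
  qed
  have "has_weak_deriv (\<lambda>x. (Re (u x))\<^sup>2 + (Im (u x))\<^sup>2) (\<lambda>x. 2 * Re (u x) * Re (w x) + 2 * Im (u x) * Im (w x))"
    by (rule wd_add[OF sq[OF re] sq[OF im]])
  moreover have "(\<lambda>x. (Re (u x))\<^sup>2 + (Im (u x))\<^sup>2) = (\<lambda>x. (cmod (u x))\<^sup>2)" by (simp add: cmod_power2)
  moreover have "(\<lambda>x. 2 * Re (u x) * Re (w x) + 2 * Im (u x) * Im (w x)) = (\<lambda>x. 2 * Re (w x * cnj (u x)))"
    by (simp add: algebra_simps)
  ultimately show ?thesis by simp
qed

lemma wd_comp_nonneg:
  fixes \<rho> \<rho>' H H' :: "real \<Rightarrow> real"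
  assumes wd: "has_weak_deriv \<rho> \<rho>'" and nn: "\<And>x. \<rho> x \<ge> 0"
    and dH: "\<And>s. s \<ge> 0 \<Longrightarrow> (H has_real_derivative H' s) (at s within {0..})"
    and cH: "continuous_on {0..} H'"
  shows "has_weak_deriv (\<lambda>x. H (\<rho> x)) (\<lambda>x. H' (\<rho> x) * \<rho>' x)"
  by (rule wd_chain[OF wd, where S="{0..}"]) (use nn dH cH in \<open>auto simp: is_interval_ci\<close>)



lemma smooth_D:
  assumes "smooth_on_nonneg g"
  obtains D where "D 0 = g" "\<And>n x. x \<ge> 0 \<Longrightarrow> (D n has_real_derivative D (Suc n) x) (at x within {0..})"
  using assms unfolding smooth_on_nonneg_def by blast

lemma deriv_within_pos:
  assumes "(g has_real_derivative d) (at x within {0..})" "x > 0"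
  shows "(g has_real_derivative d) (at x)"
proof -
  have "(g has_real_derivative d) (at x within {0<..})"
    by (rule has_field_derivative_subset[OF assms(1)]) auto
  then show ?thesis using at_within_open[of x "{0<..}"] assms(2) by simp
qed

lemma cont_from_deriv:
  assumes "\<And>x. x \<ge> 0 \<Longrightarrow> (g has_real_derivative g' x) (at x within {0..})"
  shows "continuous_on {0..} g"
  unfolding continuous_on_eq_continuous_within
  using assms DERIV_continuous by fastforce

lemma psi_bound:
  fixes D1 :: "real \<Rightarrow> real" and k M :: real
  assumes cont: "continuous_on {0..} D1" and M: "M \<ge> 0"
    and pos: "\<And>\<sigma>. \<sigma> \<in> {0..M} \<Longrightarrow> 1 + 2 * k * \<sigma> * (D1 \<sigma>)\<^sup>2 > 0"
  obtains c2 B where "c2 > 0" "\<And>\<sigma>. \<sigma> \<in> {0..M} \<Longrightarrow> 1 + 2 * k * \<sigma> * (D1 \<sigma>)\<^sup>2 \<ge> c2"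
    "\<And>\<sigma>. \<sigma> \<in> {0..M} \<Longrightarrow> \<bar>D1 \<sigma>\<bar> \<le> B"
proof -
  have c: "continuous_on {0..M} D1" using continuous_on_subset[OF cont] by auto
  have "continuous_on {0..M} (\<lambda>\<sigma>. 1 + 2 * k * \<sigma> * (D1 \<sigma>)\<^sup>2)"
    by (intro continuous_intros c)
  then obtain s0 where s0: "s0 \<in> {0..M}" "\<forall>y\<in>{0..M}. 1 + 2 * k * s0 * (D1 s0)\<^sup>2 \<le> 1 + 2 * k * y * (D1 y)\<^sup>2"
    using continuous_attains_inf[of "{0..M}"] M by fastforce
  have "compact (D1 ` {0..M})" by (rule compact_continuous_image[OF c]) auto
  then obtain B where B: "\<forall>x\<in>{0..M}. \<bar>D1 x\<bar> \<le> B"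
    by (auto dest!: compact_imp_bounded simp: bounded_iff)
  show ?thesis
    by (rule that[of "1 + 2 * k * s0 * (D1 s0)\<^sup>2" B]) (use s0 pos B in auto)
qed

lemma F_repr:
  fixes f :: "real \<Rightarrow> real" and a :: real
  assumes cf: "continuous_on {0..} f" and a: "a \<ge> 0" and s: "\<sigma> \<ge> 0"
  shows "(LBINT w=ereal \<sigma>..ereal a. f w) = integral {0..a} f - integral {0..\<sigma>} f"
proof -
  have ii: "interval_lebesgue_integrable lborel (ereal (min \<sigma> (min 0 a))) (ereal (max \<sigma> (max 0 a))) f"
    using a s by (intro interval_integrable_continuous_on continuous_on_subset[OF cf]) auto
  have "(LBINT w=ereal \<sigma>..ereal 0. f w) + (LBINT w=ereal 0..ereal a. f w) = (LBINT w=ereal \<sigma>..ereal a. f w)"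
    apply (rule interval_integral_sum)
    using ii apply (simp only: ereal_min ereal_max)
    done
  moreover have "(LBINT w=ereal 0..ereal a. f w) = integral {0..a} f"
    using a by (intro interval_integral_eq_integral borel_integrable_atLeastAtMost' continuous_on_subset[OF cf]) auto
  moreover have "(LBINT w=ereal 0..ereal \<sigma>. f w) = integral {0..\<sigma>} f"
    using s by (intro interval_integral_eq_integral borel_integrable_atLeastAtMost' continuous_on_subset[OF cf]) auto
  ultimately show ?thesis
    using interval_integral_endpoints_reverse[of "ereal \<sigma>" "ereal 0" f] by simp
qed

lemma G_deriv:
  fixes f :: "real \<Rightarrow> real"
  assumes cf: "continuous_on {0..} f" and s: "\<sigma> \<ge> 0"
  shows "((\<lambda>x. integral {0..x} f) has_real_derivative f \<sigma>) (at \<sigma> within {0..})"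
proof -
  have "((\<lambda>x. integral {0..x} f) has_real_derivative f \<sigma>) (at \<sigma> within {0..\<sigma>+1})"
    by (rule integral_has_real_derivative) (use s in \<open>auto intro: continuous_on_subset[OF cf]\<close>)
  moreover have "at \<sigma> within {0..\<sigma>+1} = at \<sigma> within {0..}"
    by (rule at_within_nhd[where S="{..<\<sigma>+1}"]) auto
  ultimately show ?thesis by simp
qed

lemma F_bound:
  fixes f Df1 :: "real \<Rightarrow> real" and a M :: real
  assumes a: "a > 0" and M: "M \<ge> a"
    and df: "\<And>x. x \<ge> 0 \<Longrightarrow> (f has_real_derivative Df1 x) (at x within {0..})"
    and fa: "f a = 0" and L: "Df1 a < 0"
    and Fpos: "\<And>\<sigma>. \<sigma> \<in> {0..M} \<Longrightarrow> \<sigma> \<noteq> a \<Longrightarrow> (LBINT w=ereal \<sigma>..ereal a. f w) > 0"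
  obtains c1 K1 where "c1 > 0"
    "\<And>\<sigma>. \<sigma> \<in> {0..M} \<Longrightarrow> c1 * (\<sigma> - a)\<^sup>2 \<le> (LBINT w=ereal \<sigma>..ereal a. f w)"
    "\<And>\<sigma>. \<sigma> \<in> {0..M} \<Longrightarrow> (LBINT w=ereal \<sigma>..ereal a. f w) \<le> K1 * (\<sigma> - a)\<^sup>2"
    "continuous_on {0..} (\<lambda>\<sigma>. LBINT w=ereal \<sigma>..ereal a. f w)"
proof -
  have cf: "continuous_on {0..} f" using cont_from_deriv[OF df] by blast
  define G where "G x = integral {0..x} f" for x
  define FF where "FF \<sigma> = G a - G \<sigma>" for \<sigma>
  have FFeq: "(LBINT w=ereal \<sigma>..ereal a. f w) = FF \<sigma>" if "\<sigma> \<ge> 0" for \<sigma>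
    unfolding FF_def G_def using F_repr[OF cf _ that, of a] a by simp
  have dFF: "(FF has_real_derivative - f \<sigma>) (at \<sigma> within {0..})" if "\<sigma> \<ge> 0" for \<sigma>
  proof -
    have "((\<lambda>x. G a - G x) has_real_derivative 0 - f \<sigma>) (at \<sigma> within {0..})"
      unfolding G_def by (intro DERIV_diff DERIV_const G_deriv[OF cf that])
    then show ?thesis by (simp add: FF_def[abs_def])
  qed
  have dFFat: "DERIV FF \<sigma> :> - f \<sigma>" if "\<sigma> > 0" for \<sigma>
    using deriv_within_pos[OF dFF that] that by simp
  have cFF: "continuous_on {0..} FF" using cont_from_deriv[OF dFF] by blast
  have FFa: "FF a = 0" by (simp add: FF_def)
  have lim: "((\<lambda>\<sigma>. FF \<sigma> / (\<sigma> - a)\<^sup>2) \<longlongrightarrow> - Df1 a / 2) (at a)"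
  proof (rule lhopital[where f' = "\<lambda>\<sigma>. - f \<sigma>" and g' = "\<lambda>\<sigma>. 2 * (\<sigma> - a)"])
    have "isCont FF a" using dFFat[OF a] by (rule DERIV_isCont)
    then show "(FF \<longlongrightarrow> 0) (at a)" using FFa by (simp add: isCont_def)
    show "((\<lambda>\<sigma>. (\<sigma> - a)\<^sup>2) \<longlongrightarrow> 0) (at a)"
      by (rule tendsto_eq_intros | simp)+
    show "\<forall>\<^sub>F x in at a. (x - a)\<^sup>2 \<noteq> 0" by (simp add: eventually_at_filter)
    show "\<forall>\<^sub>F x in at a. 2 * (x - a) \<noteq> 0" by (simp add: eventually_at_filter)
    have ev0: "\<forall>\<^sub>F x in nhds a. x \<in> {0<..}" using a by (intro eventually_nhds_in_open) auto
    have ev: "\<forall>\<^sub>F x in at a. x > 0"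
      using ev0 unfolding eventually_at_filter by (rule eventually_mono) auto
    show "\<forall>\<^sub>F x in at a. DERIV FF x :> - f x"
      by (rule eventually_mono[OF ev]) (rule dFFat)
    show "\<forall>\<^sub>F x in at a. ((\<lambda>\<sigma>. (\<sigma> - a)\<^sup>2) has_real_derivative 2 * (x - a)) (at x)"
      by (intro always_eventually allI) (auto intro!: derivative_eq_intros)
    have "((\<lambda>y. (f y - f a) / (y - a)) \<longlongrightarrow> Df1 a) (at a)"
      using deriv_within_pos[OF df[of a] a] a by (simp add: has_field_derivative_iff)
    then have "((\<lambda>y. (-1/2) * ((f y - f a) / (y - a))) \<longlongrightarrow> (-1/2) * Df1 a) (at a)"
      by (intro tendsto_mult tendsto_const)
    then show "((\<lambda>x. - f x / (2 * (x - a))) \<longlongrightarrow> - Df1 a / 2) (at a)"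
      using fa by (simp add: field_simps)
  qed
  define \<phi> where "\<phi> \<sigma> = (if \<sigma> = a then - Df1 a / 2 else FF \<sigma> / (\<sigma> - a)\<^sup>2)" for \<sigma>
  have c\<phi>: "continuous_on {0..M} \<phi>"
    unfolding continuous_on_eq_continuous_within
  proof
    fix x assume x: "x \<in> {0..M}"
    show "continuous (at x within {0..M}) \<phi>"
    proof (cases "x = a")
      case True
      have "(\<phi> \<longlongrightarrow> - Df1 a / 2) (at a)"
        by (rule Lim_transform_eventually[OF lim]) (simp add: eventually_at_filter \<phi>_def)
      moreover have "\<phi> a = - Df1 a / 2" by (simp add: \<phi>_def)
      ultimately have "(\<phi> \<longlongrightarrow> \<phi> a) (at a)" by simp
      then have "isCont \<phi> a" by (simp add: isCont_def)
      then show ?thesis using True continuous_at_imp_continuous_at_within by blast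
    next
      case False
      have "continuous (at x within {0..M}) FF"
        using continuous_on_subset[OF cFF, of "{0..M}"] x by (auto simp: continuous_on_eq_continuous_within)
      then have c: "continuous (at x within {0..M}) (\<lambda>\<sigma>. FF \<sigma> / (\<sigma> - a)\<^sup>2)"
        using False by (intro continuous_intros) auto
      show ?thesis
      proof (rule continuous_transform_within[OF c, of "\<bar>x - a\<bar>"])
        show "0 < \<bar>x - a\<bar>" using False by simp
        show "x \<in> {0..M}" by (rule x)
        fix x' assume "x' \<in> {0..M}" "dist x' x < \<bar>x - a\<bar>"
        then have "x' \<noteq> a" by (auto simp: dist_real_def)
        then show "FF x' / (x' - a)\<^sup>2 = \<phi> x'" by (simp add: \<phi>_def)
      qed
    qed
  qed
  have \<phi>pos: "\<phi> \<sigma> > 0" if "\<sigma> \<in> {0..M}" for \<sigma>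
  proof (cases "\<sigma> = a")
    case True then show ?thesis using L by (simp add: \<phi>_def)
  next
    case False
    then have "FF \<sigma> > 0" using Fpos[OF that False] FFeq[of \<sigma>] that by simp
    then show ?thesis using False by (simp add: \<phi>_def)
  qed
  have FF\<phi>: "FF \<sigma> = \<phi> \<sigma> * (\<sigma> - a)\<^sup>2" for \<sigma>
    by (cases "\<sigma> = a") (auto simp: \<phi>_def FFa)
  obtain s0 where s0: "s0 \<in> {0..M}" "\<forall>y\<in>{0..M}. \<phi> s0 \<le> \<phi> y"
    using continuous_attains_inf[OF _ _ c\<phi>] M a by fastforce
  obtain s1 where s1: "s1 \<in> {0..M}" "\<forall>y\<in>{0..M}. \<phi> y \<le> \<phi> s1"
    using continuous_attains_sup[OF _ _ c\<phi>] M a by fastforce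
  show ?thesis
  proof (rule that[of "\<phi> s0" "\<phi> s1"])
    show "\<phi> s0 > 0" using \<phi>pos[OF s0(1)] .
    fix \<sigma> assume \<sigma>: "\<sigma> \<in> {0..M}"
    have eq: "(LBINT w=ereal \<sigma>..ereal a. f w) = \<phi> \<sigma> * (\<sigma> - a)\<^sup>2" using FFeq[of \<sigma>] \<sigma> FF\<phi> by simp
    show "\<phi> s0 * (\<sigma> - a)\<^sup>2 \<le> (LBINT w=ereal \<sigma>..ereal a. f w)"
      unfolding eq using s0(2) \<sigma> by (intro mult_right_mono) auto
    show "(LBINT w=ereal \<sigma>..ereal a. f w) \<le> \<phi> s1 * (\<sigma> - a)\<^sup>2"
      unfolding eq using s1(2) \<sigma> by (intro mult_right_mono) auto
  next
    show "continuous_on {0..} (\<lambda>\<sigma>. LBINT w=ereal \<sigma>..ereal a. f w)"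
      using cFF by (rule continuous_on_eq) (simp add: FFeq)
  qed
qed

lemma F_second_deriv:
  fixes f Df1 :: "real \<Rightarrow> real" and a :: real
  assumes a: "a > 0"
    and df: "\<And>x. x \<ge> 0 \<Longrightarrow> (f has_real_derivative Df1 x) (at x within {0..})"
  shows "deriv (deriv (\<lambda>\<sigma>. LBINT w=ereal \<sigma>..ereal a. f w)) a = - Df1 a"
proof -
  have cf: "continuous_on {0..} f" using cont_from_deriv[OF df] by blast
  define FF where "FF \<sigma> = integral {0..a} f - integral {0..\<sigma>} f" for \<sigma>
  have FFeq: "(LBINT w=ereal \<sigma>..ereal a. f w) = FF \<sigma>" if "\<sigma> \<ge> 0" for \<sigma>
    unfolding FF_def using F_repr[OF cf _ that, of a] a by simp
  have dFF: "DERIV FF \<sigma> :> - f \<sigma>" if "\<sigma> > 0" for \<sigma>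
  proof -
    have "(FF has_real_derivative 0 - f \<sigma>) (at \<sigma> within {0..})"
      unfolding FF_def[abs_def] using that by (intro DERIV_diff DERIV_const G_deriv[OF cf]) auto
    then show ?thesis using deriv_within_pos that by fastforce
  qed
  have dF: "deriv (\<lambda>\<sigma>. LBINT w=ereal \<sigma>..ereal a. f w) \<sigma> = - f \<sigma>" if "\<sigma> > 0" for \<sigma>
  proof (rule DERIV_imp_deriv)
    have "\<forall>\<^sub>F x in nhds \<sigma>. (LBINT w=ereal x..ereal a. f w) = FF x"
      using that by (intro eventually_mono[OF eventually_nhds_in_open[of "{0<..}"]]) (auto simp: FFeq)
    then have "DERIV (\<lambda>\<sigma>. LBINT w=ereal \<sigma>..ereal a. f w) \<sigma> :> - f \<sigma> \<longleftrightarrow> DERIV FF \<sigma> :> - f \<sigma>"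
      by (rule DERIV_cong_ev[OF refl _ refl])
    then show "DERIV (\<lambda>\<sigma>. LBINT w=ereal \<sigma>..ereal a. f w) \<sigma> :> - f \<sigma>"
      using dFF[OF that] by simp
  qed
  show ?thesis
  proof (rule DERIV_imp_deriv)
    have "\<forall>\<^sub>F x in nhds a. deriv (\<lambda>\<sigma>. LBINT w=ereal \<sigma>..ereal a. f w) x = - f x"
      using a by (intro eventually_mono[OF eventually_nhds_in_open[of "{0<..}"]]) (auto simp: dF)
    moreover have "DERIV (\<lambda>x. - f x) a :> - Df1 a"
      by (intro DERIV_minus deriv_within_pos[OF df] a) (use a in auto)
    moreover have "\<forall>\<^sub>F x in nhds a. deriv (\<lambda>\<sigma>. LBINT w=ereal \<sigma>..ereal a. f w) x = - f x
        \<Longrightarrow> DERIV (deriv (\<lambda>\<sigma>. LBINT w=ereal \<sigma>..ereal a. f w)) a :> - Df1 a \<longleftrightarrow> DERIV (\<lambda>x. - f x) a :> - Df1 a"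
      by (rule DERIV_cong_ev[OF refl _ refl])
    ultimately show "DERIV (deriv (\<lambda>\<sigma>. LBINT w=ereal \<sigma>..ereal a. f w)) a :> - Df1 a"
      by blast
  qed
qed



lemma ineq_lower:
  fixes W R Fv D rp \<kappa> km c1 c2 a :: real
  assumes W: "W \<ge> 0" and rp: "rp\<^sup>2 \<le> 4 * R * W" and km: "km = min \<kappa> 0"
    and psi: "1 + 2 * km * R * D\<^sup>2 \<ge> c2" and F: "Fv \<ge> c1 * (R - a)\<^sup>2"
    and c1: "c1 > 0" and c2: "c2 > 0"
  shows "W + Fv + \<kappa> / 2 * (D * rp)\<^sup>2 \<ge> min c1 c2 * (W + (R - a)\<^sup>2)"
proof -
  have 1: "\<kappa> / 2 * (D * rp)\<^sup>2 \<ge> km / 2 * (D * rp)\<^sup>2"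
    using km by (intro mult_right_mono) auto
  have 2: "km / 2 * (D * rp)\<^sup>2 = (km / 2 * D\<^sup>2) * rp\<^sup>2" by (simp add: power_mult_distrib)
  have 3: "(km / 2 * D\<^sup>2) * rp\<^sup>2 \<ge> (km / 2 * D\<^sup>2) * (4 * R * W)"
    using km rp by (intro mult_left_mono_neg) (auto intro: mult_nonpos_nonneg)
  have 4: "W + (km / 2 * D\<^sup>2) * (4 * R * W) = W * (1 + 2 * km * R * D\<^sup>2)" by (simp add: algebra_simps)
  have 5: "W * (1 + 2 * km * R * D\<^sup>2) \<ge> W * c2" using W psi by (intro mult_left_mono) auto
  have 6: "W * c2 \<ge> W * min c1 c2" using W by (intro mult_left_mono) auto
  have 7: "c1 * (R - a)\<^sup>2 \<ge> min c1 c2 * (R - a)\<^sup>2" by (intro mult_right_mono) auto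
  show ?thesis using 1 2 3 4 5 6 7 F by (simp add: algebra_simps)
qed

lemma ineq_upper:
  fixes W R Fv D rp \<kappa> K1 B a M :: real
  assumes W: "W \<ge> 0" and R: "R \<ge> 0" "R \<le> M" and rp: "rp\<^sup>2 \<le> 4 * R * W"
    and D: "\<bar>D\<bar> \<le> B" and F: "Fv \<le> K1 * (R - a)\<^sup>2"
  shows "W + Fv + \<kappa> / 2 * (D * rp)\<^sup>2 \<le> (1 + \<bar>K1\<bar> + 2 * \<bar>\<kappa>\<bar> * M * B\<^sup>2) * (W + (R - a)\<^sup>2)"
proof -
  have D2: "D\<^sup>2 \<le> B\<^sup>2" using power_mono[OF D abs_ge_zero, of 2] by simp
  have "4 * R * W \<le> 4 * M * W" using R W by (intro mult_right_mono) auto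
  then have rp2: "rp\<^sup>2 \<le> 4 * M * W" using rp by linarith
  have 1: "\<kappa> / 2 * (D * rp)\<^sup>2 \<le> \<bar>\<kappa>\<bar> / 2 * (D\<^sup>2 * rp\<^sup>2)"
    by (simp add: power_mult_distrib mult_right_mono)
  have 2: "D\<^sup>2 * rp\<^sup>2 \<le> B\<^sup>2 * (4 * M * W)" using D2 rp2 by (intro mult_mono) auto
  have 3: "\<bar>\<kappa>\<bar> / 2 * (D\<^sup>2 * rp\<^sup>2) \<le> \<bar>\<kappa>\<bar> / 2 * (B\<^sup>2 * (4 * M * W))" using 2 by (intro mult_left_mono) auto
  have "K1 * (R - a)\<^sup>2 \<le> \<bar>K1\<bar> * (R - a)\<^sup>2" by (intro mult_right_mono) auto
  then have 4: "Fv \<le> \<bar>K1\<bar> * (R - a)\<^sup>2" using F by linarith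
  have M0: "M \<ge> 0" using R by simp
  have 5: "\<bar>K1\<bar> * (R - a)\<^sup>2 \<le> (1 + \<bar>K1\<bar> + 2 * \<bar>\<kappa>\<bar> * M * B\<^sup>2) * (R - a)\<^sup>2"
    using M0 by (intro mult_right_mono) auto
  have 6: "W + 2 * \<bar>\<kappa>\<bar> * M * B\<^sup>2 * W \<le> (1 + \<bar>K1\<bar> + 2 * \<bar>\<kappa>\<bar> * M * B\<^sup>2) * W"
    using W by (simp add: algebra_simps)
  show ?thesis using 1 3 4 5 6 by (simp add: algebra_simps)
qed

lemma mom_ineq:
  fixes w u :: complex and a \<mu> :: real
  assumes mu: "\<mu> > 0" "\<mu> \<le> cmod u"
  shows "\<bar>Re (\<i> * w * cnj u) * (1 - a / (cmod u)\<^sup>2)\<bar> \<le> 1 / \<mu> * ((cmod w)\<^sup>2 + ((cmod u)\<^sup>2 - a)\<^sup>2)"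
proof -
  define s where "s = cmod u"
  have s: "s > 0" "\<mu> \<le> s" using mu by (auto simp: s_def)
  have re: "\<bar>Re (\<i> * w * cnj u)\<bar> \<le> cmod w * s"
    using abs_Re_le_cmod[of "\<i> * w * cnj u"] by (simp add: norm_mult s_def)
  have eq: "1 - a / s\<^sup>2 = (s\<^sup>2 - a) / s\<^sup>2" using s by (simp add: field_simps)
  have "\<bar>Re (\<i> * w * cnj u) * (1 - a / s\<^sup>2)\<bar> = \<bar>Re (\<i> * w * cnj u)\<bar> * \<bar>s\<^sup>2 - a\<bar> / s\<^sup>2"
    unfolding eq by (simp add: abs_mult)
  also have "\<dots> \<le> cmod w * s * \<bar>s\<^sup>2 - a\<bar> / s\<^sup>2"
    using re s by (intro divide_right_mono mult_right_mono) auto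
  also have "\<dots> = cmod w * \<bar>s\<^sup>2 - a\<bar> / s" using s by (simp add: power2_eq_square)
  also have "\<dots> \<le> cmod w * \<bar>s\<^sup>2 - a\<bar> / \<mu>"
    using s mu by (intro divide_left_mono) auto
  also have "\<dots> \<le> ((cmod w)\<^sup>2 + (s\<^sup>2 - a)\<^sup>2) / \<mu>"
  proof (intro divide_right_mono)
    have "0 \<le> (cmod w - \<bar>s\<^sup>2 - a\<bar>)\<^sup>2" by simp
    then have "2 * (cmod w * \<bar>s\<^sup>2 - a\<bar>) \<le> (cmod w)\<^sup>2 + (s\<^sup>2 - a)\<^sup>2"
      by (simp add: power2_diff power2_abs)
    moreover have "cmod w * \<bar>s\<^sup>2 - a\<bar> \<ge> 0" by simp
    ultimately show "cmod w * \<bar>s\<^sup>2 - a\<bar> \<le> (cmod w)\<^sup>2 + (s\<^sup>2 - a)\<^sup>2" by linarith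
  qed (use mu in auto)
  finally show ?thesis by (simp add: s_def)
qed



theorem lemma3p1:
  fixes f h :: "real \<Rightarrow> real" and r0 \<kappa> \<xi> :: real
  assumes r0: "r0 > 0"
    and H1: "smooth_on_nonneg f" "smooth_on_nonneg h"
    and f_r0: "f (r0\<^sup>2) = 0"
    and H2: "\<forall>\<sigma>\<in>{0..r0\<^sup>2}. 1 + 2 * \<kappa> * \<sigma> * (deriv h \<sigma>)\<^sup>2 > 0"
    and H3: "\<forall>\<sigma>\<in>{0..<r0\<^sup>2}. Fpot f r0 \<sigma> > 0" "deriv (deriv (Fpot f r0)) (r0\<^sup>2) > 0"
    and kappa: "ereal \<kappa> > kappa_tilde h r0"
    and xi: "\<xi> > 0"
    and xi_F: "\<forall>\<sigma>\<in>{r0\<^sup>2<..r0\<^sup>2 + \<xi>}. Fpot f r0 \<sigma> > 0"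
    and xi_h: "\<forall>\<sigma>\<in>{r0\<^sup>2<..r0\<^sup>2 + \<xi>}. 1 + 2 * \<kappa> * \<sigma> * (deriv h \<sigma>)\<^sup>2 > 0"
  shows "\<exists>C>0. \<forall>u \<in> X_space r0. (\<forall>x. (cmod (u x))\<^sup>2 \<le> r0\<^sup>2 + \<xi>) \<longrightarrow>
           (AE x in lborel. energy_density f h \<kappa> r0 u x
               \<ge> (1 / C) * ((cmod (wderiv u x))\<^sup>2 + ((cmod (u x))\<^sup>2 - r0\<^sup>2)\<^sup>2))
         \<and> H1_norm_sq (\<lambda>x. (cmod (u x))\<^sup>2 - r0\<^sup>2) \<le> C * E_kappa f h \<kappa> r0 u
         \<and> ((INF x. cmod (u x)) > 0 \<longrightarrow>
              \<bar>momentum r0 u\<bar> \<le> C / (INF x. cmod (u x)) * E_kappa f h \<kappa> r0 u)"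
proof -
  define M where "M = r0\<^sup>2 + \<xi>"
  have r0sq: "r0\<^sup>2 > 0" using r0 by simp
  have M: "M \<ge> r0\<^sup>2" "M \<ge> 0" using xi r0sq by (auto simp: M_def)
  obtain Df where Df0: "Df 0 = f" and dDf: "\<And>n x. x \<ge> 0 \<Longrightarrow> (Df n has_real_derivative Df (Suc n) x) (at x within {0..})"
    using smooth_D[OF H1(1)] by blast
  obtain Dh where Dh0: "Dh 0 = h" and dDh: "\<And>n x. x \<ge> 0 \<Longrightarrow> (Dh n has_real_derivative Dh (Suc n) x) (at x within {0..})"
    using smooth_D[OF H1(2)] by blast
  have df: "\<And>x. x \<ge> 0 \<Longrightarrow> (f has_real_derivative Df 1 x) (at x within {0..})"
    using dDf[of _ 0] Df0 by simp
  have dh: "\<And>x. x \<ge> 0 \<Longrightarrow> (h has_real_derivative Dh 1 x) (at x within {0..})"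
    using dDh[of _ 0] Dh0 by simp
  have ch: "continuous_on {0..} (Dh 1)"
    by (rule cont_from_deriv[of "Dh 1" "Dh (Suc 1)"]) (rule dDh)
  have Fp_eq: "Fpot f r0 = (\<lambda>\<sigma>. LBINT w=ereal \<sigma>..ereal (r0\<^sup>2). f w)"
    by (rule ext) (simp add: Fpot_def)
  have L: "Df 1 (r0\<^sup>2) < 0"
    using H3(2) F_second_deriv[OF r0sq df] unfolding Fp_eq by simp
  have Fpos: "(LBINT w=ereal \<sigma>..ereal (r0\<^sup>2). f w) > 0" if "\<sigma> \<in> {0..M}" "\<sigma> \<noteq> r0\<^sup>2" for \<sigma>
  proof (cases "\<sigma> < r0\<^sup>2")
    case True then show ?thesis using H3(1) that unfolding Fp_eq by auto
  next
    case False then show ?thesis using xi_F that unfolding Fp_eq M_def by auto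
  qed
  obtain c1 K1 where c1: "c1 > 0"
    and Flow0: "\<And>\<sigma>. \<sigma> \<in> {0..M} \<Longrightarrow> c1 * (\<sigma> - r0\<^sup>2)\<^sup>2 \<le> (LBINT w=ereal \<sigma>..ereal (r0\<^sup>2). f w)"
    and Fup0: "\<And>\<sigma>. \<sigma> \<in> {0..M} \<Longrightarrow> (LBINT w=ereal \<sigma>..ereal (r0\<^sup>2). f w) \<le> K1 * (\<sigma> - r0\<^sup>2)\<^sup>2"
    and cF0: "continuous_on {0..} (\<lambda>\<sigma>. LBINT w=ereal \<sigma>..ereal (r0\<^sup>2). f w)"
    using F_bound[OF r0sq M(1) df f_r0 L Fpos] by blast
  have Flow: "c1 * (\<sigma> - r0\<^sup>2)\<^sup>2 \<le> Fpot f r0 \<sigma>" if "\<sigma> \<in> {0..M}" for \<sigma>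
    using Flow0[OF that] by (simp add: Fpot_def)
  have Fup: "Fpot f r0 \<sigma> \<le> K1 * (\<sigma> - r0\<^sup>2)\<^sup>2" if "\<sigma> \<in> {0..M}" for \<sigma>
    using Fup0[OF that] by (simp add: Fpot_def)
  have cF: "continuous_on {0..} (Fpot f r0)" using cF0 by (simp add: Fp_eq)
  define km where "km = min \<kappa> 0"
  have pos: "1 + 2 * km * \<sigma> * (Dh 1 \<sigma>)\<^sup>2 > 0" if "\<sigma> \<in> {0..M}" for \<sigma>
  proof (cases "\<kappa> \<ge> 0")
    case True then show ?thesis by (simp add: km_def)
  next
    case False
    then have kmk: "km = \<kappa>" by (simp add: km_def)
    show ?thesis
    proof (cases "\<sigma> = 0")
      case True then show ?thesis by simp
    next
      case False
      then have sp: "\<sigma> > 0" using that by simp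
      have "deriv h \<sigma> = Dh 1 \<sigma>"
        by (rule DERIV_imp_deriv) (rule deriv_within_pos[OF dh sp]; use sp in simp)
      moreover have "0 < 1 + 2 * \<kappa> * \<sigma> * (deriv h \<sigma>)\<^sup>2"
      proof (cases "\<sigma> \<le> r0\<^sup>2")
        case True then show ?thesis using bspec[OF H2, of \<sigma>] sp by simp
      next
        case False then show ?thesis using bspec[OF xi_h, of \<sigma>] that unfolding M_def by simp
      qed
      ultimately show ?thesis unfolding kmk by simp
    qed
  qed
  obtain c2 B where c2: "c2 > 0" and psi: "\<And>\<sigma>. \<sigma> \<in> {0..M} \<Longrightarrow> 1 + 2 * km * \<sigma> * (Dh 1 \<sigma>)\<^sup>2 \<ge> c2"
    and Bd: "\<And>\<sigma>. \<sigma> \<in> {0..M} \<Longrightarrow> \<bar>Dh 1 \<sigma>\<bar> \<le> B"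
    using psi_bound[OF ch M(2) pos] by blast
  define c where "c = min c1 c2"
  have c: "c > 0" using c1 c2 by (simp add: c_def)
  define C where "C = max 1 (4 * M) / c"
  have C: "C > 0" using c by (simp add: C_def)
  have invC: "1 / C \<le> c" using c by (simp add: C_def field_simps)
  have cC: "1 / c \<le> C" using c by (simp add: C_def divide_right_mono)
  define K where "K = 1 + \<bar>K1\<bar> + 2 * \<bar>\<kappa>\<bar> * M * B\<^sup>2"
  show ?thesis
  proof (rule exI[of _ C], rule conjI[OF C], intro ballI impI)
    fix u assume uX: "u \<in> X_space r0" and ub: "\<forall>x. (cmod (u x))\<^sup>2 \<le> r0\<^sup>2 + \<xi>"
    obtain v' where v': "has_weak_deriv u v'"
      and int_w: "integrable lborel (\<lambda>x. (cmod (wderiv u x))\<^sup>2)"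
      and int_r: "integrable lborel (\<lambda>x. ((cmod (u x))\<^sup>2 - r0\<^sup>2)\<^sup>2)"
      using uX unfolding X_space_def by blast
    define w where "w = wderiv u"
    have wd_u: "has_weak_deriv u w" unfolding w_def wderiv_def by (rule someI[of _ v']) (rule v')
    define \<rho> where "\<rho> x = (cmod (u x))\<^sup>2" for x
    define \<rho>' where "\<rho>' x = 2 * Re (w x * cnj (u x))" for x
    have wd\<rho>: "has_weak_deriv \<rho> \<rho>'"
      unfolding \<rho>_def[abs_def] \<rho>'_def[abs_def] by (rule wd_normsq[OF wd_u])
    have \<rho>nn: "\<rho> x \<ge> 0" for x by (simp add: \<rho>_def)
    have \<rho>M: "\<rho> x \<le> M" for x using ub by (simp add: \<rho>_def M_def)
    have \<rho>in: "\<rho> x \<in> {0..M}" for x using \<rho>nn \<rho>M by simp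
    have wdh: "has_weak_deriv (\<lambda>x. h (\<rho> x)) (\<lambda>x. Dh 1 (\<rho> x) * \<rho>' x)"
      by (rule wd_comp_nonneg[OF wd\<rho> \<rho>nn dh ch])
    have wdr: "has_weak_deriv (\<lambda>x. \<rho> x - r0\<^sup>2) \<rho>'" by (rule wd_minus_const[OF wd\<rho>])
    have AEh: "AE x in lborel. wderiv (\<lambda>x. h (\<rho> x)) x = Dh 1 (\<rho> x) * \<rho>' x" by (rule wderiv_AE[OF wdh])
    have AEr: "AE x in lborel. wderiv (\<lambda>x. \<rho> x - r0\<^sup>2) x = \<rho>' x" by (rule wderiv_AE[OF wdr])
    have \<rho>'b: "(\<rho>' x)\<^sup>2 \<le> 4 * \<rho> x * (cmod (w x))\<^sup>2" for x
    proof -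
      have "\<bar>Re (w x * cnj (u x))\<bar> \<le> \<bar>cmod (w x) * cmod (u x)\<bar>"
        using abs_Re_le_cmod[of "w x * cnj (u x)"] by (simp add: norm_mult)
      then have "(Re (w x * cnj (u x)))\<^sup>2 \<le> (cmod (w x) * cmod (u x))\<^sup>2" by (simp only: abs_le_square_iff)
      then have "4 * (Re (w x * cnj (u x)))\<^sup>2 \<le> 4 * (cmod (w x) * cmod (u x))\<^sup>2" by simp
      moreover have "(\<rho>' x)\<^sup>2 = 4 * (Re (w x * cnj (u x)))\<^sup>2"
        unfolding \<rho>'_def by (simp only: power_mult_distrib) simp
      moreover have "4 * (cmod (w x) * cmod (u x))\<^sup>2 = 4 * \<rho> x * (cmod (w x))\<^sup>2"
        unfolding \<rho>_def by (simp only: power_mult_distrib mult_ac)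
      ultimately show ?thesis by simp
    qed
    have Iw: "\<forall>a b. set_integrable lborel {a..b} w" by (rule wd_int[OF wd_u])
    have wm[measurable]: "w \<in> borel_measurable borel" using wd_measurable[OF Iw] by simp
    have I\<rho>': "\<forall>a b. set_integrable lborel {a..b} \<rho>'" by (rule wd_int[OF wd\<rho>])
    have \<rho>'m[measurable]: "\<rho>' \<in> borel_measurable borel" using wd_measurable[OF I\<rho>'] by simp
    have c\<rho>: "continuous_on UNIV \<rho>" by (rule wd_continuous[OF wd\<rho>])
    have cu: "continuous_on UNIV u" by (rule wd_continuous[OF wd_u])
    have um[measurable]: "u \<in> borel_measurable borel" using cu by (rule borel_measurable_continuous_onI)
    have \<rho>m[measurable]: "\<rho> \<in> borel_measurable borel" using c\<rho> by (rule borel_measurable_continuous_onI)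
    have Fm[measurable]: "(\<lambda>x. Fpot f r0 (\<rho> x)) \<in> borel_measurable borel"
      by (rule borel_measurable_continuous_onI, rule continuous_on_compose2[OF cF c\<rho>]) (use \<rho>nn in auto)
    have Dm[measurable]: "(\<lambda>x. Dh 1 (\<rho> x)) \<in> borel_measurable borel"
      by (rule borel_measurable_continuous_onI, rule continuous_on_compose2[OF ch c\<rho>]) (use \<rho>nn in auto)
    have wdh2: "has_weak_deriv (\<lambda>x. h (\<rho> x)) (wderiv (\<lambda>x. h (\<rho> x)))"
      unfolding wderiv_def by (rule someI[of _ "\<lambda>x. Dh 1 (\<rho> x) * \<rho>' x"]) (rule wdh)
    have whm[measurable]: "wderiv (\<lambda>x. h (\<rho> x)) \<in> borel_measurable borel"
      using wd_measurable[OF wd_int[OF wdh2]] by simp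
    have wdr2: "has_weak_deriv (\<lambda>x. \<rho> x - r0\<^sup>2) (wderiv (\<lambda>x. \<rho> x - r0\<^sup>2))"
      unfolding wderiv_def by (rule someI[of _ \<rho>']) (rule wdr)
    have wrm[measurable]: "wderiv (\<lambda>x. \<rho> x - r0\<^sup>2) \<in> borel_measurable borel"
      using wd_measurable[OF wd_int[OF wdr2]] by simp
    define e where "e x = (cmod (w x))\<^sup>2 + Fpot f r0 (\<rho> x) + \<kappa> / 2 * (wderiv (\<lambda>y. h (\<rho> y)) x)\<^sup>2" for x
    define e2 where "e2 x = (cmod (w x))\<^sup>2 + Fpot f r0 (\<rho> x) + \<kappa> / 2 * (Dh 1 (\<rho> x) * \<rho>' x)\<^sup>2" for x
    define q where "q x = (cmod (w x))\<^sup>2 + (\<rho> x - r0\<^sup>2)\<^sup>2" for x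
    have e_eq: "energy_density f h \<kappa> r0 u = e"
      by (rule ext) (simp add: energy_density_def e_def w_def \<rho>_def[abs_def])
    have em[measurable]: "e \<in> borel_measurable borel" unfolding e_def by measurable
    have AEe: "AE x in lborel. e x = e2 x" using AEh by eventually_elim (simp add: e_def e2_def)
    have qi: "integrable lborel q"
      unfolding q_def using int_w int_r by (simp add: w_def \<rho>_def)
    have e2low: "e2 x \<ge> c * q x" for x
      unfolding e2_def q_def c_def
      by (rule ineq_lower[OF _ \<rho>'b km_def psi[OF \<rho>in] Flow[OF \<rho>in] c1 c2]) simp
    have e2up: "e2 x \<le> K * q x" for x
      unfolding e2_def q_def K_def
      by (rule ineq_upper[OF _ \<rho>nn \<rho>M \<rho>'b Bd[OF \<rho>in] Fup[OF \<rho>in]]) simp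
    have qnn: "q x \<ge> 0" for x by (simp add: q_def)
    have AElow: "AE x in lborel. e x \<ge> c * q x" using AEe by eventually_elim (use e2low in simp)
    have ei: "integrable lborel e"
    proof (rule Bochner_Integration.integrable_bound[of _ "\<lambda>x. K * q x"])
      show "integrable lborel (\<lambda>x. K * q x)" using qi by simp
      show "AE x in lborel. norm (e x) \<le> norm (K * q x)"
        using AEe
      proof eventually_elim
        case (elim x)
        have "0 \<le> c * q x" using c qnn by simp
        then have "0 \<le> e2 x" using e2low[of x] by linarith
        then show ?case using elim e2up[of x] by simp
      qed
    qed simp
    have Eq: "E_kappa f h \<kappa> r0 u = integral\<^sup>L lborel e" by (simp add: E_kappa_def e_eq)
    have EL: "c * integral\<^sup>L lborel q \<le> E_kappa f h \<kappa> r0 u"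
    proof -
      have "integral\<^sup>L lborel (\<lambda>x. c * q x) \<le> integral\<^sup>L lborel e"
        by (rule integral_mono_AE[OF _ ei AElow]) (use qi in simp)
      then show ?thesis unfolding Eq by simp
    qed
    have qint0: "integral\<^sup>L lborel q \<ge> 0" using qnn by (simp add: integral_nonneg_AE)
    have E0: "E_kappa f h \<kappa> r0 u \<ge> 0" using EL qint0 c by (meson mult_nonneg_nonneg order.trans less_imp_le)
    have splitq: "integral\<^sup>L lborel q = integral\<^sup>L lborel (\<lambda>x. (cmod (w x))\<^sup>2) + integral\<^sup>L lborel (\<lambda>x. (\<rho> x - r0\<^sup>2)\<^sup>2)"
      unfolding q_def using int_w int_r by (simp add: w_def \<rho>_def)
    have P1: "AE x in lborel. energy_density f h \<kappa> r0 u x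
               \<ge> (1 / C) * ((cmod (wderiv u x))\<^sup>2 + ((cmod (u x))\<^sup>2 - r0\<^sup>2)\<^sup>2)"
      using AElow
    proof eventually_elim
      case (elim x)
      have "(1 / C) * q x \<le> c * q x" using invC qnn by (intro mult_right_mono) auto
      then show ?case using elim by (simp add: e_eq q_def w_def \<rho>_def)
    qed
    have P2: "H1_norm_sq (\<lambda>x. (cmod (u x))\<^sup>2 - r0\<^sup>2) \<le> C * E_kappa f h \<kappa> r0 u"
    proof -
      have fx: "(\<lambda>x. (cmod (u x))\<^sup>2 - r0\<^sup>2) = (\<lambda>x. \<rho> x - r0\<^sup>2)" by (simp add: \<rho>_def)
      have i\<rho>'2: "integrable lborel (\<lambda>x. (\<rho>' x)\<^sup>2)"
      proof (rule Bochner_Integration.integrable_bound[of _ "\<lambda>x. 4 * M * (cmod (w x))\<^sup>2"])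
        show "integrable lborel (\<lambda>x. 4 * M * (cmod (w x))\<^sup>2)" using int_w by (simp add: w_def)
        show "AE x in lborel. norm ((\<rho>' x)\<^sup>2) \<le> norm (4 * M * (cmod (w x))\<^sup>2)"
        proof (intro AE_I2)
          fix x
          have "4 * \<rho> x * (cmod (w x))\<^sup>2 \<le> 4 * M * (cmod (w x))\<^sup>2" using \<rho>M[of x] by (intro mult_right_mono) auto
          then show "norm ((\<rho>' x)\<^sup>2) \<le> norm (4 * M * (cmod (w x))\<^sup>2)" using \<rho>'b[of x] M by simp
        qed
      qed simp
      have "integral\<^sup>L lborel (\<lambda>x. (wderiv (\<lambda>x. \<rho> x - r0\<^sup>2) x)\<^sup>2) = integral\<^sup>L lborel (\<lambda>x. (\<rho>' x)\<^sup>2)"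
        by (rule integral_cong_AE) (use AEr in auto)
      also have "\<dots> \<le> integral\<^sup>L lborel (\<lambda>x. 4 * M * (cmod (w x))\<^sup>2)"
      proof (rule integral_mono[OF i\<rho>'2])
        show "integrable lborel (\<lambda>x. 4 * M * (cmod (w x))\<^sup>2)" using int_w by (simp add: w_def)
        fix x
        have "4 * \<rho> x * (cmod (w x))\<^sup>2 \<le> 4 * M * (cmod (w x))\<^sup>2" using \<rho>M[of x] by (intro mult_right_mono) auto
        then show "(\<rho>' x)\<^sup>2 \<le> 4 * M * (cmod (w x))\<^sup>2" using \<rho>'b[of x] by simp
      qed
      also have "\<dots> = 4 * M * integral\<^sup>L lborel (\<lambda>x. (cmod (w x))\<^sup>2)" by simp
      finally have d: "integral\<^sup>L lborel (\<lambda>x. (wderiv (\<lambda>x. \<rho> x - r0\<^sup>2) x)\<^sup>2) \<le> 4 * M * integral\<^sup>L lborel (\<lambda>x. (cmod (w x))\<^sup>2)" .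
      have Iw0: "integral\<^sup>L lborel (\<lambda>x. (cmod (w x))\<^sup>2) \<ge> 0" by (simp add: integral_nonneg_AE)
      have Ir0: "integral\<^sup>L lborel (\<lambda>x. (\<rho> x - r0\<^sup>2)\<^sup>2) \<ge> 0" by (simp add: integral_nonneg_AE)
      have "H1_norm_sq (\<lambda>x. \<rho> x - r0\<^sup>2) \<le> integral\<^sup>L lborel (\<lambda>x. (\<rho> x - r0\<^sup>2)\<^sup>2) + 4 * M * integral\<^sup>L lborel (\<lambda>x. (cmod (w x))\<^sup>2)"
        unfolding H1_norm_sq_def using d by simp
      also have "\<dots> \<le> max 1 (4 * M) * integral\<^sup>L lborel q"
      proof -
        have a1: "1 * integral\<^sup>L lborel (\<lambda>x. (\<rho> x - r0\<^sup>2)\<^sup>2) \<le> max 1 (4 * M) * integral\<^sup>L lborel (\<lambda>x. (\<rho> x - r0\<^sup>2)\<^sup>2)"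
          using Ir0 by (intro mult_right_mono) auto
        have a2: "(4 * M) * integral\<^sup>L lborel (\<lambda>x. (cmod (w x))\<^sup>2) \<le> max 1 (4 * M) * integral\<^sup>L lborel (\<lambda>x. (cmod (w x))\<^sup>2)"
          using Iw0 by (intro mult_right_mono) auto
        show ?thesis unfolding splitq distrib_left using a1 a2 by linarith
      qed
      also have "\<dots> = C * (c * integral\<^sup>L lborel q)" using c by (simp add: C_def)
      also have "\<dots> \<le> C * E_kappa f h \<kappa> r0 u" using EL C by (intro mult_left_mono) auto
      finally show ?thesis unfolding fx .
    qed
    have P3: "\<bar>momentum r0 u\<bar> \<le> C / (INF x. cmod (u x)) * E_kappa f h \<kappa> r0 u" if mu: "(INF x. cmod (u x)) > 0"
    proof -
      define \<mu> where "\<mu> = (INF x. cmod (u x))"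
      have mu0: "\<mu> > 0" using mu by (simp add: \<mu>_def)
      have mule: "\<mu> \<le> cmod (u x)" for x unfolding \<mu>_def
        by (rule cINF_lower) (auto intro: bdd_belowI[of _ 0])
      define p where "p x = Re (\<i> * w x * cnj (u x)) * (1 - r0\<^sup>2 / (cmod (u x))\<^sup>2)" for x
      have pb: "\<bar>p x\<bar> \<le> 1 / \<mu> * q x" for x
        unfolding p_def q_def \<rho>_def using mom_ineq[OF mu0 mule[of x], of "w x" "r0\<^sup>2"] by simp
      have cum[measurable]: "(\<lambda>x. cnj (u x)) \<in> borel_measurable borel"
        by (rule borel_measurable_continuous_onI) (intro continuous_intros cu)
      have um2: "(\<lambda>x. (cmod (u x))\<^sup>2) \<in> borel_measurable borel" using \<rho>m by (simp add: \<rho>_def[abs_def])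
      have dm[measurable]: "(\<lambda>x. 1 - r0\<^sup>2 / (cmod (u x))\<^sup>2) \<in> borel_measurable borel"
        by (intro borel_measurable_diff borel_measurable_divide borel_measurable_const um2)
      have pm[measurable]: "p \<in> borel_measurable borel" unfolding p_def by measurable
      have pi: "integrable lborel p"
        by (rule Bochner_Integration.integrable_bound[of _ "\<lambda>x. 1 / \<mu> * q x"]) (use qi pb mu0 qnn in auto)
      have "\<bar>momentum r0 u\<bar> = \<bar>integral\<^sup>L lborel p\<bar>" unfolding momentum_def p_def[abs_def] w_def by (rule refl)
      also have "\<dots> \<le> integral\<^sup>L lborel (\<lambda>x. \<bar>p x\<bar>)" using integral_norm_bound[of lborel p] by simp
      also have "\<dots> \<le> integral\<^sup>L lborel (\<lambda>x. 1 / \<mu> * q x)"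
        by (rule integral_mono) (use pi qi pb in auto)
      also have "\<dots> = 1 / \<mu> * integral\<^sup>L lborel q" by simp
      also have "\<dots> \<le> 1 / \<mu> * (1 / c * E_kappa f h \<kappa> r0 u)"
        using EL c mu0 by (intro mult_left_mono) (auto simp: field_simps)
      also have "\<dots> \<le> 1 / \<mu> * (C * E_kappa f h \<kappa> r0 u)"
        using cC E0 mu0 by (intro mult_left_mono mult_right_mono) auto
      also have "\<dots> = C / \<mu> * E_kappa f h \<kappa> r0 u" by simp
      finally show ?thesis by (simp add: \<mu>_def)
    qed
    show "(AE x in lborel. energy_density f h \<kappa> r0 u x
               \<ge> (1 / C) * ((cmod (wderiv u x))\<^sup>2 + ((cmod (u x))\<^sup>2 - r0\<^sup>2)\<^sup>2))
         \<and> H1_norm_sq (\<lambda>x. (cmod (u x))\<^sup>2 - r0\<^sup>2) \<le> C * E_kappa f h \<kappa> r0 u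
         \<and> ((INF x. cmod (u x)) > 0 \<longrightarrow>
              \<bar>momentum r0 u\<bar> \<le> C / (INF x. cmod (u x)) * E_kappa f h \<kappa> r0 u)"
      using P1 P2 P3 by blast
  qed
qed


end
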